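(* Let $\phi$ be a nonconstant rational inner function on $\mathbb{D}^2$ and let $\alpha\in\mathbb{T}$. Then the Clark measure $\sigma_\alpha$ of $\phi$ has no point masses, i.e. $\sigma_\alpha(\{\zeta\})=0$ for every $\zeta\in\mathbb{T}^2$.
   Context: $\mathbb{D}$ is the open unit disk and $\mathbb{T}$ the unit circle. A rational inner function (RIF) on $\mathbb{D}^2$ is a rational function $\phi$ that is holomorphic and bounded on $\mathbb{D}^2$ with $|\phi(\zeta)|=1$ for almost every $\zeta\in\mathbb{T}^2$. The Poisson kernel of $\mathbb{D}^2$ is $P_z(\zeta)=\frac{(1-|z_1|^2)(1-|z_2|^2)}{|\zeta_1-z_1|^2|\zeta_2-z_2|^2}$ for $z\in\mathbb{D}^2,\ \zeta\in\mathbb{T}^2$. For $\alpha\in\mathbb{T}$, the Clark measure $\sigma_\alpha$ of $\phi$ is the unique positive (finite) Borel measure on $\mathbb{T}^2$ such that $\frac{1-|\phi(z)|^2}{|\alpha-\phi(z)|^2}=\int_{\mathbb{T}^2}P_z(\zeta)\,d\sigma_\alpha(\zeta)$ for all $z\in\mathbb{D}^2$. *)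

theory Defs
  imports "HOL-Analysis.Analysis"
begin

definition bidisk :: "(complex \<times> complex) set" where
  "bidisk = {z. norm (fst z) < 1 \<and> norm (snd z) < 1}"

definition torus2 :: "(complex \<times> complex) set" where
  "torus2 = {z. norm (fst z) = 1 \<and> norm (snd z) = 1}"

text \<open>Polynomial functions in two complex variables, written as explicit finite
  sums of monomials (multivariate polynomials are not in the library).\<close>

definition bipoly :: "(complex \<times> complex \<Rightarrow> complex) \<Rightarrow> bool" where
  "bipoly p \<longleftrightarrow> (\<exists>n::nat. \<exists>a :: nat \<Rightarrow> nat \<Rightarrow> complex.
      \<forall>z. p z = (\<Sum>i\<le>n. \<Sum>j\<le>n. a i j * fst z ^ i * snd z ^ j))"

text \<open>It is rational: phi = p/q off the zero set of a polynomial q which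
  does not vanish identically on the bidisk; it is holomorphic (a continuous
  function agreeing with p/q off a proper analytic subset is holomorphic, by
  Riemann's extension theorem; conversely holomorphic functions are continuous)
  and bounded on the bidisk; and the rational function p/q has modulus one at
  almost every point of the torus (w.r.t. arc-length measure, parametrised by
  angles (s,t) \<mapsto> (cis s, cis t)).\<close>

definition rational_inner :: "(complex \<times> complex \<Rightarrow> complex) \<Rightarrow> bool" where
  "rational_inner \<phi> \<longleftrightarrow>
     (\<exists>p q. bipoly p \<and> bipoly q \<and> (\<exists>z\<in>bidisk. q z \<noteq> 0) \<and>
        (\<forall>z\<in>bidisk. q z \<noteq> 0 \<longrightarrow> \<phi> z = p z / q z) \<and>
        continuous_on bidisk \<phi> \<and>
        (\<exists>B. \<forall>z\<in>bidisk. norm (\<phi> z) \<le> B) \<and>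
        (AE x in (lborel :: (real \<times> real) measure).
           q (cis (fst x), cis (snd x)) \<noteq> 0 \<and>
           norm (p (cis (fst x), cis (snd x)) / q (cis (fst x), cis (snd x))) = 1))"

definition poisson2 :: "complex \<times> complex \<Rightarrow> complex \<times> complex \<Rightarrow> real" where
  "poisson2 z \<zeta> =
     ((1 - (norm (fst z))\<^sup>2) * (1 - (norm (snd z))\<^sup>2)) /
     ((norm (fst \<zeta> - fst z))\<^sup>2 * (norm (snd \<zeta> - snd z))\<^sup>2)"

definition is_clark_measure ::
  "(complex \<times> complex \<Rightarrow> complex) \<Rightarrow> complex \<Rightarrow> (complex \<times> complex) measure \<Rightarrow> bool" where
  "is_clark_measure \<phi> \<alpha> \<sigma> \<longleftrightarrow>
     sets \<sigma> = sets borel \<and> finite_measure \<sigma> \<and>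
     emeasure \<sigma> (UNIV - torus2) = 0 \<and>
     (\<forall>z\<in>bidisk.
        ennreal ((1 - (norm (\<phi> z))\<^sup>2) / (norm (\<alpha> - \<phi> z))\<^sup>2)
        = (\<integral>\<^sup>+ \<zeta>. ennreal (poisson2 z \<zeta>) \<partial>\<sigma>))"

end

theory Submission
  imports Defs "HOL-Complex_Analysis.Complex_Analysis" "HOL-Computational_Algebra.Polynomial"
begin

definition EE :: "real \<Rightarrow> complex" where
  "EE t = exp (2 * of_real pi * \<i> * of_real t)"

lemma EE_norm [simp]: "norm (EE t) = 1"
  unfolding EE_def by simp

lemma EE_nz [simp]: "EE t \<noteq> 0"
  unfolding EE_def by simp

lemma EE_cnj: "cnj (EE t) = inverse (EE t)"
  unfolding EE_def by (simp add: exp_cnj exp_minus[symmetric])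

lemma continuous_EE [continuous_intros]: "continuous_on S EE"
  unfolding EE_def by (intro continuous_intros)

lemma continuous_EE_comp [continuous_intros]: "continuous_on S f \<Longrightarrow> continuous_on S (\<lambda>x. EE (f x))"
  unfolding EE_def by (intro continuous_intros)

lemma circ_in_ball:
  assumes "norm c + \<rho> < 1" "\<rho> > 0"
  shows "norm (c + of_real \<rho> * EE t) < 1"
proof -
  have "norm (c + of_real \<rho> * EE t) \<le> norm c + norm (of_real \<rho> * EE t)" by (rule norm_triangle_ineq)
  also have "norm (of_real \<rho> * EE t) = \<rho>" using assms by (simp add: norm_mult)
  finally show ?thesis using assms by simp
qed

lemma circ_zero:
  assumes hol: "g holomorphic_on ball 0 1" and c: "norm c + \<rho> < 1" and r: "\<rho> > 0"
  shows "((\<lambda>t. g (c + of_real \<rho> * EE t) * EE t) has_integral 0) {0..1}"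
proof -
  have sub: "path_image (circlepath c \<rho>) \<subseteq> ball 0 1"
  proof
    fix w assume "w \<in> path_image (circlepath c \<rho>)"
    then have "dist c w = \<rho>" using r by (simp add: path_image_circlepath)
    then have "norm w \<le> norm c + \<rho>"
      by (metis dist_norm norm_minus_commute norm_triangle_sub add.commute)
    then show "w \<in> ball 0 1" using c by simp
  qed
  have "(g has_contour_integral 0) (circlepath c \<rho>)"
    by (rule Cauchy_theorem_convex_simple[OF hol convex_ball valid_path_circlepath sub]) simp
  then have "((\<lambda>t. g (circlepath c \<rho> t) * vector_derivative (circlepath c \<rho>) (at t)) has_integral 0) {0..1}"
    by (simp add: has_contour_integral)
  moreover have "(\<lambda>t. g (circlepath c \<rho> t) * vector_derivative (circlepath c \<rho>) (at t)) = (\<lambda>t. (2 * pi * \<i> * \<rho>) * (g (c + of_real \<rho> * EE t) * EE t))"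
    by (rule ext, simp only: vector_derivative_circlepath, simp add: circlepath EE_def mult_ac)
  ultimately have "((\<lambda>t. (2 * pi * \<i> * \<rho>) * (g (c + of_real \<rho> * EE t) * EE t)) has_integral 0) {0..1}"
    by simp
  then have "((\<lambda>t. inverse (2 * pi * \<i> * \<rho>) * ((2 * pi * \<i> * \<rho>) * (g (c + of_real \<rho> * EE t) * EE t))) has_integral inverse (2 * pi * \<i> * \<rho>) * 0) {0..1}"
    by (rule has_integral_mult_right)
  moreover have K0: "(2 * pi * \<i> * complex_of_real \<rho>) \<noteq> 0" using r pi_gt_zero by simp
  moreover have "(\<lambda>t. inverse (2 * pi * \<i> * \<rho>) * ((2 * pi * \<i> * \<rho>) * (g (c + of_real \<rho> * EE t) * EE t)))
      = (\<lambda>t. g (c + of_real \<rho> * EE t) * EE t)"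
    by (rule ext) (metis K0 mult.assoc left_inverse mult_1_left)
  ultimately show ?thesis by simp
qed

lemma circ_deriv:
  assumes hol: "g holomorphic_on ball 0 1" and c: "norm c + \<rho> < 1" and r: "\<rho> > 0"
  shows "((\<lambda>t. g (c + of_real \<rho> * EE t) * cnj (EE t)) has_integral (\<rho> * deriv g c)) {0..1}"
proof -
  have sub: "cball c \<rho> \<subseteq> ball 0 1"
  proof
    fix w assume "w \<in> cball c \<rho>"
    then have "dist c w \<le> \<rho>" by simp
    then have "norm w \<le> norm c + \<rho>"
      by (metis dist_norm norm_minus_commute norm_triangle_sub add.commute add_left_mono order_trans)
    then show "w \<in> ball 0 1" using c by simp
  qed
  have "((\<lambda>u. g u / (u - c) ^ (Suc 1)) has_contour_integral ((2 * pi * \<i>) / (fact 1) * (deriv ^^ 1) g c)) (circlepath c \<rho>)"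
    apply (rule Cauchy_has_contour_integral_higher_derivative_circlepath)
    using sub hol r ball_subset_cball[of c \<rho>]
      apply (auto intro: holomorphic_on_imp_continuous_on holomorphic_on_subset)
    by (meson ball_subset_cball holomorphic_on_subset order_trans)
  then have "((\<lambda>t. g (circlepath c \<rho> t) / (circlepath c \<rho> t - c)^2 * vector_derivative (circlepath c \<rho>) (at t)) has_integral ((2 * pi * \<i>) * deriv g c)) {0..1}"
    by (simp add: has_contour_integral power2_eq_square)
  also have "(\<lambda>t. g (circlepath c \<rho> t) / (circlepath c \<rho> t - c)^2 * vector_derivative (circlepath c \<rho>) (at t))
     = (\<lambda>t. (2 * pi * \<i> / \<rho>) * (g (c + of_real \<rho> * EE t) * cnj (EE t)))"
    using r apply (intro ext, simp only: vector_derivative_circlepath)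
    apply (simp only: circlepath EE_cnj flip: EE_def)
    apply (simp add: field_simps power2_eq_square)
    done
  finally have "((\<lambda>t. inverse (2 * pi * \<i> / \<rho>) * ((2 * pi * \<i> / \<rho>) * (g (c + of_real \<rho> * EE t) * cnj (EE t)))) has_integral inverse (2 * pi * \<i> / \<rho>) * ((2 * pi * \<i>) * deriv g c)) {0..1}"
    using has_integral_mult_right by blast
  then show ?thesis using r by (simp add: field_simps)
qed

definition PK :: "complex \<Rightarrow> complex \<Rightarrow> real" where
  "PK w \<zeta> = (1 - (norm w)^2) / (norm (\<zeta> - w))^2"

lemma poisson2_PK: "poisson2 z \<zeta> = PK (fst z) (fst \<zeta>) * PK (snd z) (snd \<zeta>)"
  by (simp add: poisson2_def PK_def)

lemma Re_cayley:
  assumes "norm a = 1" "b \<noteq> a"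
  shows "Re ((a + b) / (a - b)) = (1 - (norm b)^2) / (norm (a - b))^2"
proof -
  have a: "(Re a)^2 + (Im a)^2 = 1" using assms(1) by (simp add: cmod_def)
  have "(Re a - Re b)^2 + (Im a - Im b)^2 \<noteq> 0" using assms
    by (metis cmod_power2 minus_complex.sel(1) minus_complex.sel(2) right_minus_eq zero_eq_power2 norm_eq_zero)
  then show ?thesis
    using a by (simp only: cmod_power2 Re_divide, simp add: field_simps) (simp add: power2_eq_square algebra_simps)
qed

lemma PK_Re: "norm \<zeta> = 1 \<Longrightarrow> w \<noteq> \<zeta> \<Longrightarrow> PK w \<zeta> = Re ((\<zeta> + w) / (\<zeta> - w))"
  by (simp add: PK_def Re_cayley)

lemma of_real_Re_eq: "complex_of_real (Re z) = (z + cnj z) / 2"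
  by (simp add: complex_add_cnj)

lemma PK_int:
  assumes z: "norm \<zeta> = 1" and c: "norm c + \<rho> < 1" and r: "\<rho> > 0"
  shows "((\<lambda>t. of_real (PK (c + of_real \<rho> * EE t) \<zeta>) * cnj (EE t)) has_integral (\<rho> * \<zeta> / (\<zeta> - c)^2)) {0..1}"
proof -
  define g where "g w = (\<zeta> + w) / (\<zeta> - w)" for w
  have nz: "w \<noteq> \<zeta>" if "w \<in> ball 0 1" for w using that z by auto
  have hol: "g holomorphic_on ball 0 1"
    unfolding g_def using nz by (intro holomorphic_intros) auto
  have "norm c < 1" using c r by simp
  then have cz: "c \<noteq> \<zeta>" using z by auto
  have "(g has_field_derivative (2 * \<zeta> / (\<zeta> - c)^2)) (at c)"
    unfolding g_def using cz
    by (auto intro!: derivative_eq_intros simp: field_simps power2_eq_square)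
  then have dg: "deriv g c = 2 * \<zeta> / (\<zeta> - c)^2" by (rule DERIV_imp_deriv)
  have I1: "((\<lambda>t. g (c + of_real \<rho> * EE t) * cnj (EE t)) has_integral (\<rho> * (2 * \<zeta> / (\<zeta> - c)^2))) {0..1}"
    using circ_deriv[OF hol c r] dg by simp
  have "((\<lambda>t. g (c + of_real \<rho> * EE t) * EE t) has_integral 0) {0..1}"
    using circ_zero[OF hol c r] .
  then have I0: "((\<lambda>t. cnj (g (c + of_real \<rho> * EE t)) * cnj (EE t)) has_integral 0) {0..1}"
    using has_integral_cnj[of "\<lambda>t. g (c + of_real \<rho> * EE t) * EE t" 0 "{0..1}"] by (simp add: o_def)
  have "((\<lambda>t. (1/2) * (g (c + of_real \<rho> * EE t) * cnj (EE t) + cnj (g (c + of_real \<rho> * EE t)) * cnj (EE t)))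
        has_integral (1/2) * (\<rho> * (2 * \<zeta> / (\<zeta> - c)^2) + 0)) {0..1}"
    by (intro has_integral_mult_right has_integral_add I1 I0)
  moreover have "(1/2) * (g (c + of_real \<rho> * EE t) * cnj (EE t) + cnj (g (c + of_real \<rho> * EE t)) * cnj (EE t))
      = of_real (PK (c + of_real \<rho> * EE t) \<zeta>) * cnj (EE t)" for t
  proof -
    have "c + of_real \<rho> * EE t \<noteq> \<zeta>" using nz circ_in_ball[OF c r, of t] by auto
    then have "PK (c + of_real \<rho> * EE t) \<zeta> = Re (g (c + of_real \<rho> * EE t))"
      using PK_Re[OF z] g_def by simp
    then show ?thesis by (simp add: of_real_Re_eq algebra_simps)
  qed
  ultimately show ?thesis by simp
qed

lemma PK_int2:
  assumes z: "norm \<zeta> = 1" and c: "norm c + \<rho> < 1" and r: "\<rho> > 0"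
  shows "((\<lambda>t. of_real (PK (c + of_real \<rho> * EE t) \<zeta>) * EE t) has_integral cnj (\<rho> * \<zeta> / (\<zeta> - c)^2)) {0..1}"
proof -
  have "((cnj \<circ> (\<lambda>t. of_real (PK (c + of_real \<rho> * EE t) \<zeta>) * cnj (EE t))) has_integral cnj (\<rho> * \<zeta> / (\<zeta> - c)^2)) {0..1}"
    by (subst has_integral_cnj) (rule PK_int[OF assms])
  moreover have "(cnj \<circ> (\<lambda>t. of_real (PK (c + of_real \<rho> * EE t) \<zeta>) * cnj (EE t))) = (\<lambda>t. of_real (PK (c + of_real \<rho> * EE t) \<zeta>) * EE t)"
    by (rule ext) simp
  ultimately show ?thesis by simp
qed

lemma double_zero:
  fixes F :: "complex \<times> complex \<Rightarrow> complex"
  assumes cont: "continuous_on (cbox (0,0) (1,1)) (\<lambda>x::real\<times>real. F (c1 + of_real \<rho> * EE (fst x), c2 + of_real \<rho> * EE (snd x)))"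
    and hol2: "\<And>s. s \<in> {0..1} \<Longrightarrow> (\<lambda>y. F (c1 + of_real \<rho> * EE s, y)) holomorphic_on ball 0 1"
    and hol1: "\<And>t. t \<in> {0..1} \<Longrightarrow> (\<lambda>x. F (x, c2 + of_real \<rho> * EE t)) holomorphic_on ball 0 1"
    and c1: "norm c1 + \<rho> < 1" and c2: "norm c2 + \<rho> < 1" and r: "\<rho> > 0"
  shows "integral {0..1} (\<lambda>s. integral {0..1} (\<lambda>t. of_real (Re (F (c1 + of_real \<rho> * EE s, c2 + of_real \<rho> * EE t))) * cnj (EE s) * EE t)) = 0"
proof -
  define G where "G s t = F (c1 + of_real \<rho> * EE s, c2 + of_real \<rho> * EE t)" for s t
  have contG: "continuous_on (cbox (0,0) (1,1)) (\<lambda>x::real\<times>real. G (fst x) (snd x))"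
    using cont by (simp add: G_def)
  have contG': "continuous_on (cbox (0,0) (1,1)) (\<lambda>(s,t). G s t)"
    using contG by (simp add: case_prod_unfold)
  have cs: "continuous_on {0..1} (G s)" if "s \<in> {0..1}" for s
  proof -
    have "continuous_on {0..1} ((\<lambda>x::real\<times>real. G (fst x) (snd x)) \<circ> (\<lambda>t. (s,t)))"
      by (rule continuous_on_compose[OF _ continuous_on_subset[OF contG]])
        (use that in \<open>auto intro!: continuous_intros simp: cbox_Pair_eq\<close>)
    then show ?thesis by (simp add: o_def)
  qed
  have ct: "continuous_on {0..1} (\<lambda>s. G s t)" if "t \<in> {0..1}" for t
  proof -
    have "continuous_on {0..1} ((\<lambda>x::real\<times>real. G (fst x) (snd x)) \<circ> (\<lambda>s. (s,t)))"
      by (rule continuous_on_compose[OF _ continuous_on_subset[OF contG]])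
        (use that in \<open>auto intro!: continuous_intros simp: cbox_Pair_eq\<close>)
    then show ?thesis by (simp add: o_def)
  qed
  have inner0: "integral {0..1} (\<lambda>t. G s t * cnj (EE s) * EE t) = 0" if "s \<in> {0..1}" for s
  proof -
    have "integral {0..1} (\<lambda>t. G s t * EE t) = 0"
      using circ_zero[OF hol2[OF that] c2 r] unfolding G_def by (rule integral_unique)
    then have "integral {0..1} (\<lambda>t. cnj (EE s) * (G s t * EE t)) = 0" by simp
    then show ?thesis by (simp add: mult_ac)
  qed
  have inner0': "integral {0..1} (\<lambda>s. G s t * EE s * cnj (EE t)) = 0" if "t \<in> {0..1}" for t
  proof -
    have "integral {0..1} (\<lambda>s. G s t * EE s) = 0"
      using circ_zero[OF hol1[OF that] c1 r] unfolding G_def by (rule integral_unique)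
    then have "integral {0..1} (\<lambda>s. cnj (EE t) * (G s t * EE s)) = 0" by simp
    then show ?thesis by (simp add: mult_ac)
  qed
  have step2: "integral {0..1} (\<lambda>t. of_real (Re (G s t)) * cnj (EE s) * EE t)
      = cnj (integral {0..1} (\<lambda>t. G s t * EE s * cnj (EE t))) / 2" if s: "s \<in> {0..1}" for s
  proof -
    have i1: "(\<lambda>t. G s t * cnj (EE s) * EE t) integrable_on {0..1}"
      by (intro integrable_continuous_interval continuous_intros cs[OF s])
    have i2: "(\<lambda>t. cnj (G s t) * cnj (EE s) * EE t) integrable_on {0..1}"
      by (intro integrable_continuous_interval continuous_intros cs[OF s])
    have "integral {0..1} (\<lambda>t. of_real (Re (G s t)) * cnj (EE s) * EE t)
        = integral {0..1} (\<lambda>t. (G s t * cnj (EE s) * EE t + cnj (G s t) * cnj (EE s) * EE t) / 2)"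
      by (rule Henstock_Kurzweil_Integration.integral_cong) (simp add: of_real_Re_eq algebra_simps add_divide_distrib)
    also have "\<dots> = (integral {0..1} (\<lambda>t. G s t * cnj (EE s) * EE t) + integral {0..1} (\<lambda>t. cnj (G s t) * cnj (EE s) * EE t)) / 2"
      using i1 i2 by (simp add: integral_add integral_divide)
    also have "\<dots> = integral {0..1} (\<lambda>t. cnj (G s t) * cnj (EE s) * EE t) / 2"
      using inner0[OF s] by simp
    also have "integral {0..1} (\<lambda>t. cnj (G s t) * cnj (EE s) * EE t) = cnj (integral {0..1} (\<lambda>t. G s t * EE s * cnj (EE t)))"
      by (simp add: integral_cnj)
    finally show ?thesis .
  qed
  have "integral {0..1} (\<lambda>s. integral {0..1} (\<lambda>t. of_real (Re (G s t)) * cnj (EE s) * EE t))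
      = integral {0..1} (\<lambda>s. cnj (integral {0..1} (\<lambda>t. G s t * EE s * cnj (EE t))) / 2)"
    by (rule Henstock_Kurzweil_Integration.integral_cong) (rule step2)
  also have "\<dots> = cnj (integral {0..1} (\<lambda>s. integral {0..1} (\<lambda>t. G s t * EE s * cnj (EE t)))) / 2"
    by (simp add: integral_cnj integral_divide)
  also have "integral {0..1} (\<lambda>s. integral {0..1} (\<lambda>t. G s t * EE s * cnj (EE t)))
      = integral {0..1} (\<lambda>t. integral {0..1} (\<lambda>s. G s t * EE s * cnj (EE t)))"
  proof -
    have "continuous_on (cbox (0,0) (1,1)) (\<lambda>(s,t). G s t * EE s * cnj (EE t))"
    proof -
      have "continuous_on (cbox (0,0) (1,1)) (\<lambda>x::real\<times>real. G (fst x) (snd x) * EE (fst x) * cnj (EE (snd x)))"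
        by (intro continuous_intros contG)
      then show ?thesis by (simp add: case_prod_unfold)
    qed
    from integral_swap_continuous[OF this] show ?thesis by (simp add: cbox_interval)
  qed
  also have "\<dots> = integral {0..1} (\<lambda>t::real. 0::complex)"
    using inner0' by (intro Henstock_Kurzweil_Integration.integral_cong) auto
  finally show ?thesis by (simp add: G_def)
qed

lemma PK_meas: "f \<in> borel_measurable M \<Longrightarrow> g \<in> borel_measurable M \<Longrightarrow> (\<lambda>x. PK (f x) (g x)) \<in> borel_measurable M"
  unfolding PK_def
  by (intro borel_measurable_divide borel_measurable_diff borel_measurable_power borel_measurable_norm borel_measurable_const) auto

lemma closed_torus2: "closed torus2"
  unfolding torus2_def by (intro closed_Collect_conj closed_Collect_eq continuous_intros)

lemma torus2_sets: "torus2 \<in> sets borel"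
  using closed_torus2 by simp

lemma cont_meas: "continuous_on UNIV f \<Longrightarrow> f \<in> borel_measurable borel"
  by (rule borel_measurable_continuous_onI)

lemma Q_borel:
  "(\<lambda>p::(real\<times>real)\<times>(complex\<times>complex). of_real (indicator torus2 (snd p) * PK (c1 + of_real \<rho> * EE (fst (fst p))) (fst (snd p)) * PK (c2 + of_real \<rho> * EE (snd (fst p))) (snd (snd p))) * cnj (EE (fst (fst p))) * EE (snd (fst p))) \<in> borel_measurable borel"
proof -
  have t1: "(UNIV \<times> torus2 :: ((real\<times>real)\<times>(complex\<times>complex)) set) \<in> sets borel"
    using closed_torus2 by (intro borel_closed closed_Times) auto
  have i1: "indicator (UNIV \<times> torus2) = (\<lambda>p::(real\<times>real)\<times>(complex\<times>complex). indicator torus2 (snd p) :: real)"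
    by (rule ext) (auto simp: indicator_def)
  have i: "(\<lambda>p::(real\<times>real)\<times>(complex\<times>complex). indicator torus2 (snd p) :: real) \<in> borel_measurable borel"
    unfolding i1[symmetric] by (rule borel_measurable_indicator[OF t1])
  have a: "(\<lambda>p::(real\<times>real)\<times>(complex\<times>complex). c1 + of_real \<rho> * EE (fst (fst p))) \<in> borel_measurable borel"
    by (intro cont_meas continuous_intros)
  have b: "(\<lambda>p::(real\<times>real)\<times>(complex\<times>complex). c2 + of_real \<rho> * EE (snd (fst p))) \<in> borel_measurable borel"
    by (intro cont_meas continuous_intros)
  have c: "(\<lambda>p::(real\<times>real)\<times>(complex\<times>complex). fst (snd p)) \<in> borel_measurable borel"
    by (intro cont_meas continuous_intros)
  have d: "(\<lambda>p::(real\<times>real)\<times>(complex\<times>complex). snd (snd p)) \<in> borel_measurable borel"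
    by (intro cont_meas continuous_intros)
  have e1: "(\<lambda>p::(real\<times>real)\<times>(complex\<times>complex). cnj (EE (fst (fst p)))) \<in> borel_measurable borel"
    by (intro cont_meas continuous_intros)
  have e2: "(\<lambda>p::(real\<times>real)\<times>(complex\<times>complex). EE (snd (fst p))) \<in> borel_measurable borel"
    by (intro cont_meas continuous_intros)
  have f: "(\<lambda>p::(real\<times>real)\<times>(complex\<times>complex). indicator torus2 (snd p) * PK (c1 + of_real \<rho> * EE (fst (fst p))) (fst (snd p)) * PK (c2 + of_real \<rho> * EE (snd (fst p))) (snd (snd p))) \<in> borel_measurable borel"
    by (rule borel_measurable_times[OF borel_measurable_times[OF i PK_meas[OF a c]] PK_meas[OF b d]])
  have g: "(\<lambda>p::(real\<times>real)\<times>(complex\<times>complex). complex_of_real (indicator torus2 (snd p) * PK (c1 + of_real \<rho> * EE (fst (fst p))) (fst (snd p)) * PK (c2 + of_real \<rho> * EE (snd (fst p))) (snd (snd p)))) \<in> borel_measurable borel"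
    by (rule measurable_compose[OF f borel_measurable_of_real])
  show ?thesis
    by (rule borel_measurable_times[OF borel_measurable_times[OF g e1] e2])
qed

lemma PK_cont [continuous_intros]:
  assumes "continuous_on S f" "\<And>x. x \<in> S \<Longrightarrow> f x \<noteq> \<zeta>"
  shows "continuous_on S (\<lambda>x. PK (f x) \<zeta>)"
  unfolding PK_def using assms by (intro continuous_intros) auto

lemma PK_bound:
  assumes "norm \<zeta> = 1" "norm w \<le> a" "a < 1"
  shows "PK w \<zeta> \<le> 1 / (1 - a)^2" "0 \<le> PK w \<zeta>"
proof -
  have "norm (\<zeta> - w) \<ge> 1 - norm w" using assms norm_triangle_ineq2[of \<zeta> w] by simp
  then have d: "norm (\<zeta> - w) \<ge> 1 - a" using assms by simp
  then have d2: "(norm (\<zeta> - w))^2 \<ge> (1 - a)^2" using assms by (intro power_mono) auto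
  have n: "1 - (norm w)^2 \<le> 1" "0 \<le> 1 - (norm w)^2" using assms
    by (auto simp: power_le_one abs_le_iff power2_le_iff_abs_le)
  have pos: "(1 - a)^2 > 0" using assms by simp
  show "PK w \<zeta> \<le> 1 / (1 - a)^2" unfolding PK_def
    using n d2 pos by (intro frac_le) auto
  show "0 \<le> PK w \<zeta>" unfolding PK_def using n by simp
qed

lemma fubini_step:
  fixes \<sigma> :: "(complex \<times> complex) measure" and u :: "complex \<times> complex \<Rightarrow> real"
  assumes sets: "sets \<sigma> = sets borel" and fin: "finite_measure \<sigma>"
    and c1: "norm c1 + \<rho> < 1" and c2: "norm c2 + \<rho> < 1" and r: "\<rho> > 0"
    and U: "\<And>s t. s \<in> {0..1} \<Longrightarrow> t \<in> {0..1} \<Longrightarrow> u (c1 + of_real \<rho> * EE s, c2 + of_real \<rho> * EE t)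
             = (\<integral>\<zeta>. indicator torus2 \<zeta> * poisson2 (c1 + of_real \<rho> * EE s, c2 + of_real \<rho> * EE t) \<zeta> \<partial>\<sigma>)"
    and contu: "continuous_on (cbox (0,0) (1,1)) (\<lambda>x::real\<times>real. u (c1 + of_real \<rho> * EE (fst x), c2 + of_real \<rho> * EE (snd x)))"
  shows "integral {0..1} (\<lambda>s. integral {0..1} (\<lambda>t. of_real (u (c1 + of_real \<rho> * EE s, c2 + of_real \<rho> * EE t)) * cnj (EE s) * EE t))
     = (\<integral>\<zeta>. indicator torus2 \<zeta> *\<^sub>R ((\<rho> * fst \<zeta> / (fst \<zeta> - c1)^2) * cnj (\<rho> * snd \<zeta> / (snd \<zeta> - c2)^2)) \<partial>\<sigma>)"
proof -
  interpret fm: finite_measure \<sigma> by (rule fin)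
  interpret P: pair_sigma_finite lborel \<sigma> ..
  have spc: "space \<sigma> = UNIV" using sets_eq_imp_space_eq[OF sets] by simp
  define B where "B = cbox (0::real,0::real) (1,1)"
  define W where "W x = of_real (u (c1 + of_real \<rho> * EE (fst x), c2 + of_real \<rho> * EE (snd x))) * cnj (EE (fst x)) * EE (snd x)" for x :: "real \<times> real"
  define Q where "Q x \<zeta> = of_real (indicator torus2 \<zeta> * PK (c1 + of_real \<rho> * EE (fst x)) (fst \<zeta>) * PK (c2 + of_real \<rho> * EE (snd x)) (snd \<zeta>)) * cnj (EE (fst x)) * EE (snd x)"
    for x :: "real \<times> real" and \<zeta> :: "complex \<times> complex"
  have Bmem: "x \<in> B \<longleftrightarrow> fst x \<in> {0..1} \<and> snd x \<in> {0..1}" for x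
    unfolding B_def by (cases x) (auto simp: cbox_Pair_iff cbox_interval)
  have contW: "continuous_on B W"
    unfolding W_def B_def by (intro continuous_intros contu)
  have s1: "integral {0..1} (\<lambda>s. integral {0..1} (\<lambda>t. of_real (u (c1 + of_real \<rho> * EE s, c2 + of_real \<rho> * EE t)) * cnj (EE s) * EE t))
      = integral B W"
    using integral_prod_continuous[OF contW[unfolded B_def]] by (simp add: B_def W_def cbox_interval)
  have si: "set_integrable lborel B W"
    unfolding set_integrable_def B_def by (rule borel_integrable_compact[OF compact_cbox contW[unfolded B_def]])
  have s2: "integral B W = (LINT x:B|lborel. W x)"
    by (rule set_borel_integral_eq_integral(2)[OF si, symmetric])
  have s3: "W x = (\<integral>\<zeta>. Q x \<zeta> \<partial>\<sigma>)" if "x \<in> B" for x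
  proof -
    have "(\<integral>\<zeta>. Q x \<zeta> \<partial>\<sigma>) = of_real (\<integral>\<zeta>. indicator torus2 \<zeta> * PK (c1 + of_real \<rho> * EE (fst x)) (fst \<zeta>) * PK (c2 + of_real \<rho> * EE (snd x)) (snd \<zeta>) \<partial>\<sigma>) * cnj (EE (fst x)) * EE (snd x)"
      unfolding Q_def by (simp only: integral_mult_left_zero integral_complex_of_real)
    also have "(\<integral>\<zeta>. indicator torus2 \<zeta> * PK (c1 + of_real \<rho> * EE (fst x)) (fst \<zeta>) * PK (c2 + of_real \<rho> * EE (snd x)) (snd \<zeta>) \<partial>\<sigma>)
        = u (c1 + of_real \<rho> * EE (fst x), c2 + of_real \<rho> * EE (snd x))"
      using U[of "fst x" "snd x"] that Bmem by (simp add: poisson2_PK mult.assoc)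
    finally show ?thesis by (simp add: W_def)
  qed
  have s4: "(LINT x:B|lborel. W x) = (LINT x:B|lborel. (\<integral>\<zeta>. Q x \<zeta> \<partial>\<sigma>))"
    by (rule set_lebesgue_integral_cong) (auto simp: B_def s3)
  define K where "K = 1 / (1 - (norm c1 + \<rho>))^2 * (1 / (1 - (norm c2 + \<rho>))^2)"
  have Qbound: "norm (Q x \<zeta>) \<le> K" for x \<zeta>
  proof (cases "\<zeta> \<in> torus2")
    case True
    then have n1: "norm (fst \<zeta>) = 1" and n2: "norm (snd \<zeta>) = 1" by (auto simp: torus2_def)
    have w1: "norm (c1 + of_real \<rho> * EE (fst x)) \<le> norm c1 + \<rho>"
      using norm_triangle_ineq[of c1 "of_real \<rho> * EE (fst x)"] r by (simp add: norm_mult)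
    have w2: "norm (c2 + of_real \<rho> * EE (snd x)) \<le> norm c2 + \<rho>"
      using norm_triangle_ineq[of c2 "of_real \<rho> * EE (snd x)"] r by (simp add: norm_mult)
    note b1 = PK_bound[OF n1 w1 c1] and b2 = PK_bound[OF n2 w2 c2]
    have "norm (Q x \<zeta>) = PK (c1 + of_real \<rho> * EE (fst x)) (fst \<zeta>) * PK (c2 + of_real \<rho> * EE (snd x)) (snd \<zeta>)"
      using True b1(2) b2(2) by (simp add: Q_def norm_mult)
    also have "\<dots> \<le> K" unfolding K_def using b1 b2 by (intro mult_mono) auto
    finally show ?thesis .
  next
    case False
    then have "Q x \<zeta> = 0" by (simp add: Q_def)
    moreover have "0 \<le> K" unfolding K_def by simp
    ultimately show ?thesis by simp
  qed
  have K0: "0 \<le> K" unfolding K_def by simp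
  have Qmeas: "(\<lambda>p. Q (fst p) (snd p)) \<in> borel_measurable (lborel \<Otimes>\<^sub>M \<sigma>)"
  proof -
    have "sets (lborel \<Otimes>\<^sub>M \<sigma>) = sets (borel \<Otimes>\<^sub>M borel)"
      by (rule sets_pair_measure_cong[OF sets_lborel sets])
    also have "\<dots> = sets (borel :: ((real\<times>real)\<times>(complex\<times>complex)) measure)"
      by (rule arg_cong[where f=sets, OF borel_prod])
    finally have S: "sets (lborel \<Otimes>\<^sub>M \<sigma>) = sets (borel :: ((real\<times>real)\<times>(complex\<times>complex)) measure)" .
    show ?thesis
      unfolding Q_def measurable_cong_sets[OF S refl] by (rule Q_borel)
  qed
  have integ: "integrable (lborel \<Otimes>\<^sub>M \<sigma>) (\<lambda>(x, \<zeta>). indicator B x *\<^sub>R Q x \<zeta>)"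
  proof (rule integrableI_bounded_set[where A="B \<times> space \<sigma>" and B=K])
    show "B \<times> space \<sigma> \<in> sets (lborel \<Otimes>\<^sub>M \<sigma>)" by (auto simp: B_def)
    have Bm: "(\<lambda>p::(real\<times>real)\<times>(complex\<times>complex). indicator B (fst p) :: real) \<in> borel_measurable (lborel \<Otimes>\<^sub>M \<sigma>)"
    proof (rule measurable_compose[OF measurable_fst borel_measurable_indicator])
      show "B \<in> sets lborel" unfolding B_def sets_lborel by (rule borel_closed[OF closed_cbox])
    qed
    show "(\<lambda>(x, \<zeta>). indicator B x *\<^sub>R Q x \<zeta>) \<in> borel_measurable (lborel \<Otimes>\<^sub>M \<sigma>)"
      unfolding case_prod_unfold by (rule borel_measurable_scaleR[OF Bm Qmeas])
    have e1: "emeasure (lborel \<Otimes>\<^sub>M \<sigma>) (B \<times> space \<sigma>) = emeasure lborel B * emeasure \<sigma> (space \<sigma>)"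
      by (rule fm.emeasure_pair_measure_Times) (auto simp: B_def)
    have e2: "emeasure lborel B < \<infinity>" unfolding B_def by (rule emeasure_bounded_finite[OF bounded_cbox])
    have e3: "emeasure \<sigma> (space \<sigma>) < \<infinity>" using fm.emeasure_finite[of "space \<sigma>"] by (auto simp: less_top[symmetric])
    show "emeasure (lborel \<Otimes>\<^sub>M \<sigma>) (B \<times> space \<sigma>) < \<infinity>"
      unfolding e1 using e2 e3 by (simp add: ennreal_mult_less_top)
    show "AE p in lborel \<Otimes>\<^sub>M \<sigma>. p \<in> B \<times> space \<sigma> \<longrightarrow> norm (case p of (x, \<zeta>) \<Rightarrow> indicator B x *\<^sub>R Q x \<zeta>) \<le> K"
    proof (rule AE_I2)
      fix p :: "(real \<times> real) \<times> (complex \<times> complex)"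
      obtain x \<zeta> where p: "p = (x, \<zeta>)" by (cases p)
      show "p \<in> B \<times> space \<sigma> \<longrightarrow> norm (case p of (x, \<zeta>) \<Rightarrow> indicator B x *\<^sub>R Q x \<zeta>) \<le> K"
        using Qbound[of x \<zeta>] K0 by (cases "x \<in> B") (simp_all add: p)
    qed
    show "AE p in lborel \<Otimes>\<^sub>M \<sigma>. p \<notin> B \<times> space \<sigma> \<longrightarrow> (case p of (x, \<zeta>) \<Rightarrow> indicator B x *\<^sub>R Q x \<zeta>) = 0"
    proof (rule AE_I2)
      fix p :: "(real \<times> real) \<times> (complex \<times> complex)"
      obtain x \<zeta> where p: "p = (x, \<zeta>)" by (cases p)
      show "p \<notin> B \<times> space \<sigma> \<longrightarrow> (case p of (x, \<zeta>) \<Rightarrow> indicator B x *\<^sub>R Q x \<zeta>) = 0"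
        by (simp add: p spc)
    qed
  qed
  have s5: "(LINT x:B|lborel. (\<integral>\<zeta>. Q x \<zeta> \<partial>\<sigma>)) = (\<integral>\<zeta>. (LINT x:B|lborel. Q x \<zeta>) \<partial>\<sigma>)"
    using P.Fubini_integral[OF integ] by (simp add: set_lebesgue_integral_def)
  have s6: "(LINT x:B|lborel. Q x \<zeta>) = indicator torus2 \<zeta> *\<^sub>R ((\<rho> * fst \<zeta> / (fst \<zeta> - c1)^2) * cnj (\<rho> * snd \<zeta> / (snd \<zeta> - c2)^2))" for \<zeta> :: "complex \<times> complex"
  proof (cases "\<zeta> \<in> torus2")
    case False
    then show ?thesis by (simp add: Q_def set_lebesgue_integral_def)
  next
    case True
    then have n1: "norm (fst \<zeta>) = 1" and n2: "norm (snd \<zeta>) = 1" by (auto simp: torus2_def)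
    define f1 where "f1 s = of_real (PK (c1 + of_real \<rho> * EE s) (fst \<zeta>)) * cnj (EE s)" for s
    define f2 where "f2 t = of_real (PK (c2 + of_real \<rho> * EE t) (snd \<zeta>)) * EE t" for t
    have Qf: "Q x \<zeta> = f1 (fst x) * f2 (snd x)" for x
      using True by (simp add: Q_def f1_def f2_def mult_ac)
    have ne1: "c1 + of_real \<rho> * EE s \<noteq> fst \<zeta>" for s
      using circ_in_ball[OF c1 r, of s] n1 by auto
    have ne2: "c2 + of_real \<rho> * EE s \<noteq> snd \<zeta>" for s
      using circ_in_ball[OF c2 r, of s] n2 by auto
    have contQ: "continuous_on B (\<lambda>x. f1 (fst x) * f2 (snd x))"
      unfolding f1_def f2_def using ne1 ne2 by (intro continuous_intros) auto
    have "(LINT x:B|lborel. Q x \<zeta>) = (LINT x:B|lborel. f1 (fst x) * f2 (snd x))"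
      by (simp add: Qf)
    also have "\<dots> = integral B (\<lambda>x. f1 (fst x) * f2 (snd x))"
    proof -
      have "set_integrable lborel B (\<lambda>x. f1 (fst x) * f2 (snd x))"
        unfolding set_integrable_def B_def by (rule borel_integrable_compact[OF compact_cbox contQ[unfolded B_def]])
      then show ?thesis by (rule set_borel_integral_eq_integral(2))
    qed
    also have "\<dots> = integral {0..1} (\<lambda>s. integral {0..1} (\<lambda>t. f1 s * f2 t))"
      using integral_prod_continuous[OF contQ[unfolded B_def]] by (simp add: B_def cbox_interval)
    also have "\<dots> = integral {0..1} f1 * integral {0..1} f2"
      by (simp add: integral_mult_right integral_mult_left)
    also have "integral {0..1} f1 = \<rho> * fst \<zeta> / (fst \<zeta> - c1)^2"
      unfolding f1_def by (rule integral_unique[OF PK_int[OF n1 c1 r]])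
    also have "integral {0..1} f2 = cnj (\<rho> * snd \<zeta> / (snd \<zeta> - c2)^2)"
      unfolding f2_def by (rule integral_unique[OF PK_int2[OF n2 c2 r]])
    finally show ?thesis using True by simp
  qed
  have s7: "(\<integral>\<zeta>. (LINT x:B|lborel. Q x \<zeta>) \<partial>\<sigma>) = (\<integral>\<zeta>. indicator torus2 \<zeta> *\<^sub>R ((\<rho> * fst \<zeta> / (fst \<zeta> - c1)^2) * cnj (\<rho> * snd \<zeta> / (snd \<zeta> - c2)^2)) \<partial>\<sigma>)"
    by (rule Bochner_Integration.integral_cong[OF refl]) (rule s6)
  show ?thesis
    by (rule trans[OF s1 trans[OF s2 trans[OF s4 trans[OF s5 s7]]]])
qed

lemma bipoly_swap:
  assumes "bipoly q" shows "bipoly (\<lambda>z. q (snd z, fst z))"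
proof -
  obtain n a where a: "\<forall>z. q z = (\<Sum>i\<le>n. \<Sum>j\<le>n. a i j * fst z ^ i * snd z ^ j)"
    using assms unfolding bipoly_def by blast
  have "q (snd z, fst z) = (\<Sum>i\<le>n. \<Sum>j\<le>n. a j i * fst z ^ i * snd z ^ j)" for z
  proof -
    have "q (snd z, fst z) = (\<Sum>i\<le>n. \<Sum>j\<le>n. a i j * snd z ^ i * fst z ^ j)" using a by simp
    also have "\<dots> = (\<Sum>j\<le>n. \<Sum>i\<le>n. a i j * snd z ^ i * fst z ^ j)" by (rule sum.swap)
    also have "\<dots> = (\<Sum>i\<le>n. \<Sum>j\<le>n. a j i * fst z ^ i * snd z ^ j)"
      by (intro sum.cong refl) (simp add: mult_ac)
    finally show ?thesis .
  qed
  note * = this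
  show ?thesis unfolding bipoly_def
    by (rule exI[of _ n], rule exI[of _ "\<lambda>i j. a j i"]) (simp add: *)
qed

lemma slice_poly:
  fixes q :: "complex \<times> complex \<Rightarrow> complex"
  assumes "\<forall>z. q z = (\<Sum>i\<le>n. \<Sum>j\<le>n. a i j * fst z ^ i * snd z ^ j)"
  shows "q (x, y) = poly (\<Sum>i\<le>n. Polynomial.monom (\<Sum>j\<le>n. a i j * y ^ j) i) x"
proof -
  have "poly (\<Sum>i\<le>n. Polynomial.monom (\<Sum>j\<le>n. a i j * y ^ j) i) x = (\<Sum>i\<le>n. (\<Sum>j\<le>n. a i j * y ^ j) * x ^ i)"
    by (simp only: poly_sum Polynomial.poly_monom)
  also have "\<dots> = (\<Sum>i\<le>n. \<Sum>j\<le>n. a i j * x ^ i * y ^ j)"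
    by (simp add: sum_distrib_left sum_distrib_right mult_ac)
  finally show ?thesis using assms by simp
qed

lemma coeff_slice:
  "i \<le> n \<Longrightarrow> coeff (\<Sum>i\<le>n. Polynomial.monom (c i) i) i = (c i :: complex)"
  by (simp add: coeff_sum coeff_monom)

lemma good_finite:
  assumes "bipoly q" "\<not> (\<forall>x. q (x, y) = 0)"
  shows "finite {x. q (x, y) = 0}"
proof -
  obtain n a where a: "\<forall>z. q z = (\<Sum>i\<le>n. \<Sum>j\<le>n. a i j * fst z ^ i * snd z ^ j)"
    using assms unfolding bipoly_def by blast
  define P where "P = (\<Sum>i\<le>n. Polynomial.monom (\<Sum>j\<le>n. a i j * y ^ j) i)"
  have qP: "q (x, y) = poly P x" for x using slice_poly[OF a] P_def by simp
  have "P \<noteq> 0" using assms(2) qP by auto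
  then show ?thesis using poly_roots_finite[of P] qP by simp
qed

lemma bad_finite:
  assumes "bipoly q" "\<exists>z. q z \<noteq> 0"
  shows "finite {y. \<forall>x. q (x, y) = 0}"
proof -
  obtain n a where a: "\<forall>z. q z = (\<Sum>i\<le>n. \<Sum>j\<le>n. a i j * fst z ^ i * snd z ^ j)"
    using assms unfolding bipoly_def by blast
  define C where "C i = (\<Sum>j\<le>n. Polynomial.monom (a i j) j)" for i
  have pC: "poly (C i) y = (\<Sum>j\<le>n. a i j * y ^ j)" for i y
    by (simp add: C_def poly_sum Polynomial.poly_monom)
  obtain z0 where z0: "q z0 \<noteq> 0" using assms by blast
  have "q z0 = (\<Sum>i\<le>n. poly (C i) (snd z0) * fst z0 ^ i)"
    using a[rule_format, of z0] by (simp add: pC sum_distrib_left mult_ac)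
  then obtain i0 where i0: "i0 \<le> n" "poly (C i0) (snd z0) \<noteq> 0"
    using z0 by (metis (no_types, lifting) atMost_iff mult_zero_left sum.neutral)
  then have C0: "C i0 \<noteq> 0" by auto
  have "{y. \<forall>x. q (x, y) = 0} \<subseteq> {y. poly (C i0) y = 0}"
  proof safe
    fix y assume y: "\<forall>x. q (x, y) = 0"
    define P where "P = (\<Sum>i\<le>n. Polynomial.monom (\<Sum>j\<le>n. a i j * y ^ j) i)"
    have "poly P x = 0" for x using slice_poly[OF a, of x y] y P_def by simp
    then have "P = 0" using poly_all_0_iff_0 by blast
    then have "coeff P i0 = 0" by simp
    then show "poly (C i0) y = 0" using coeff_slice[OF i0(1)] P_def pC by simp
  qed
  then show ?thesis using poly_roots_finite[OF C0] finite_subset by blast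
qed

lemma bisum_hol:
  "(\<lambda>x. \<Sum>i\<le>n. \<Sum>j\<le>n. a i j * x ^ i * (y::complex) ^ j) holomorphic_on S"
  by (intro holomorphic_on_sum holomorphic_intros)

lemma slice_hol:
  assumes p: "bipoly p" and q: "bipoly q"
    and eq: "\<forall>z\<in>bidisk. q z \<noteq> 0 \<longrightarrow> \<phi> z = p z / q z"
    and cont: "continuous_on bidisk \<phi>" and y: "norm y < 1" and good: "\<not> (\<forall>x. q (x, y) = 0)"
  shows "(\<lambda>x. \<phi> (x, y)) holomorphic_on ball 0 1"
proof -
  obtain n a where a: "\<forall>z. q z = (\<Sum>i\<le>n. \<Sum>j\<le>n. a i j * fst z ^ i * snd z ^ j)"
    using q unfolding bipoly_def by blast
  obtain m b where b: "\<forall>z. p z = (\<Sum>i\<le>m. \<Sum>j\<le>m. b i j * fst z ^ i * snd z ^ j)"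
    using p unfolding bipoly_def by blast
  define Z where "Z = {x. q (x, y) = 0}"
  have finZ: "finite Z" unfolding Z_def by (rule good_finite[OF q good])
  have inb: "(x, y) \<in> bidisk" if "x \<in> ball 0 1" for x using that y by (simp add: bidisk_def)
  have c1: "continuous_on (ball 0 1) (\<lambda>x::complex. (x, y))" by (intro continuous_intros)
  have c2: "(\<lambda>x. (x, y)) ` ball 0 1 \<subseteq> bidisk" using inb by blast
  have c: "continuous_on (ball 0 1) (\<lambda>x. \<phi> (x, y))"
    using continuous_on_compose2[OF cont c1 c2] .
  have qx: "q (x, y) = (\<Sum>i\<le>n. \<Sum>j\<le>n. a i j * x ^ i * y ^ j)" for x
    using a[rule_format, of "(x, y)"] by simp
  have px: "p (x, y) = (\<Sum>i\<le>m. \<Sum>j\<le>m. b i j * x ^ i * y ^ j)" for x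
    using b[rule_format, of "(x, y)"] by simp
  have h0: "(\<lambda>x. (\<Sum>i\<le>m. \<Sum>j\<le>m. b i j * x ^ i * y ^ j) / (\<Sum>i\<le>n. \<Sum>j\<le>n. a i j * x ^ i * y ^ j)) holomorphic_on (ball 0 1 - Z)"
  proof (rule holomorphic_on_divide[OF bisum_hol bisum_hol])
    show "\<And>x. x \<in> ball 0 1 - Z \<Longrightarrow> (\<Sum>i\<le>n. \<Sum>j\<le>n. a i j * x ^ i * y ^ j) \<noteq> 0"
      unfolding Z_def using qx by simp
  qed
  have h1: "(\<lambda>x. \<phi> (x, y)) holomorphic_on (ball 0 1 - Z)"
  proof (rule holomorphic_transform[OF h0])
    fix x assume x: "x \<in> ball 0 1 - Z"
    then have "q (x, y) \<noteq> 0" "(x, y) \<in> bidisk" using inb unfolding Z_def by auto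
    then have "\<phi> (x, y) = p (x, y) / q (x, y)" using eq by blast
    then show "(\<Sum>i\<le>m. \<Sum>j\<le>m. b i j * x ^ i * y ^ j) / (\<Sum>i\<le>n. \<Sum>j\<le>n. a i j * x ^ i * y ^ j) = \<phi> (x, y)"
      using qx px by simp
  qed
  show ?thesis
    by (rule no_isolated_singularity[OF c h1 open_ball finZ])
qed

lemma meas_sigma: "sets \<sigma> = sets borel \<Longrightarrow> f \<in> borel_measurable borel \<Longrightarrow> f \<in> borel_measurable \<sigma>"
  using measurable_cong_sets[of \<sigma> borel borel borel] by simp

lemma key_lower:
  assumes sets: "sets \<sigma> = sets (borel :: (complex \<times> complex) measure)"
  shows "emeasure \<sigma> {\<zeta>} * ennreal (f \<zeta>) \<le> (\<integral>\<^sup>+ x. ennreal (f x) \<partial>\<sigma>)"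
proof -
  have z: "{\<zeta>} \<in> sets \<sigma>" using sets by simp
  have "emeasure \<sigma> {\<zeta>} * ennreal (f \<zeta>) = (\<integral>\<^sup>+ x. ennreal (f \<zeta>) * indicator {\<zeta>} x \<partial>\<sigma>)"
    using nn_integral_cmult_indicator[OF z, of "ennreal (f \<zeta>)"] by (simp add: mult.commute)
  also have "\<dots> \<le> (\<integral>\<^sup>+ x. ennreal (f x) \<partial>\<sigma>)"
    by (intro nn_integral_mono) (auto simp: indicator_def)
  finally show ?thesis .
qed

lemma PK_pos: "norm w < 1 \<Longrightarrow> norm \<zeta> = 1 \<Longrightarrow> PK w \<zeta> > 0"
proof -
  assume w: "norm w < 1" and z: "norm \<zeta> = 1"
  then have "w \<noteq> \<zeta>" by auto
  moreover have "(norm w)^2 < 1" using w by (simp add: power_less_one_iff abs_less_iff)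
  ultimately show ?thesis unfolding PK_def by (intro divide_pos_pos) auto
qed

lemma norm_sub_ge:
  fixes a b :: complex
  assumes "norm a = 1" "norm b = 1" "0 < r" "r < 1"
  shows "norm (a - of_real r * b) \<ge> 1 - r"
proof -
  have "norm (a - of_real r * b) \<ge> norm a - norm (of_real r * b)" by (rule norm_triangle_ineq2)
  moreover have "norm (of_real r * b) = r" using assms by (simp add: norm_mult)
  ultimately show ?thesis using assms by linarith
qed

lemma frac_le1:
  fixes a b :: complex
  assumes "norm a = 1" "norm b = 1" "0 < r" "r < 1"
  shows "(1 - r)^2 / (norm (a - of_real r * b))^2 \<le> 1"
proof -
  have d: "norm (a - of_real r * b) \<ge> 1 - r" by (rule norm_sub_ge[OF assms])
  then have "(1 - r)^2 \<le> (norm (a - of_real r * b))^2" using assms by (intro power_mono) auto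
  moreover have "norm (a - of_real r * b) > 0" using d assms by linarith
  ultimately show ?thesis by simp
qed

lemma kern_norm:
  fixes a c za zc :: complex
  assumes "norm a = 1" "norm c = 1"
  shows "norm (of_real ((1 - r)^4) * (a / (a - za)^2 * cnj (c / (c - zc)^2)))
     = ((1 - r)^2 / (norm (a - za))^2) * ((1 - r)^2 / (norm (c - zc))^2)"
proof -
  have n1: "norm (complex_of_real ((1 - r)^4)) = (1 - r)^4"
    by (simp only: norm_of_real) (simp add: power_even_abs)
  have n2: "norm (a / (a - za)^2) = 1 / (norm (a - za))^2"
    using assms by (simp add: norm_divide norm_power)
  have n3: "norm (cnj (c / (c - zc)^2)) = 1 / (norm (c - zc))^2"
    using assms by (simp only: complex_mod_cnj) (simp add: norm_divide norm_power)
  have "norm (of_real ((1 - r)^4) * (a / (a - za)^2 * cnj (c / (c - zc)^2)))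
      = (1 - r)^4 * (1 / (norm (a - za))^2) * (1 / (norm (c - zc))^2)"
    by (simp only: norm_mult n1 n2 n3 mult.assoc)
  also have "\<dots> = ((1 - r)^2 / (norm (a - za))^2) * ((1 - r)^2 / (norm (c - zc))^2)"
    by (simp add: power4_eq_xxxx power2_eq_square)
  finally show ?thesis .
qed

lemma kern_alg:
  fixes s za w :: complex
  assumes "s \<noteq> 0" "za \<noteq> 0" "w \<noteq> 0"
  shows "s^4 * (za / (s * za)^2 * (w / (s * w)^2)) = 1 / (za * w)"
  using assms by (simp add: field_simps power2_eq_square power4_eq_xxxx)

lemma kern_at:
  assumes "norm za = 1" "norm zc = 1" "r < 1"
  shows "of_real ((1 - r)^4) * (za / (za - of_real r * za)^2 * cnj (zc / (zc - of_real r * zc)^2)) = cnj za * zc"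
proof -
  have a: "za * cnj za = 1" using assms complex_norm_square[of za] by simp
  have c: "zc * cnj zc = 1" using assms complex_norm_square[of zc] by simp
  have za0: "za \<noteq> 0" and zc0: "cnj zc \<noteq> 0" using assms by auto
  define s where "s = complex_of_real (1 - r)"
  have s0: "s \<noteq> 0" using assms by (simp add: s_def)
  have e1: "za - of_real r * za = s * za" by (simp add: s_def algebra_simps)
  have e2: "cnj (zc / (zc - of_real r * zc)^2) = cnj zc / (s * cnj zc)^2"
    by (simp add: s_def algebra_simps)
  have e3: "complex_of_real ((1 - r)^4) = s^4" by (simp add: s_def)
  have "of_real ((1 - r)^4) * (za / (za - of_real r * za)^2 * cnj (zc / (zc - of_real r * zc)^2))
      = s^4 * (za / (s * za)^2 * (cnj zc / (s * cnj zc)^2))"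
    by (simp only: e1 e2 e3)
  also have "\<dots> = 1 / (za * cnj zc)" by (rule kern_alg[OF s0 za0 zc0])
  also have "\<dots> = cnj za * zc"
  proof -
    have "(za * cnj za) * (zc * cnj zc) = 1" using a c by simp
    then have p: "za * (zc * (cnj za * cnj zc)) = 1" by (simp add: mult_ac)
    show ?thesis using za0 zc0 p by (simp add: field_simps)
  qed
  finally show ?thesis .
qed

lemma kern_meas:
  "(\<lambda>\<zeta>'::complex\<times>complex. fst \<zeta>' / (fst \<zeta>' - a)^2 * cnj (snd \<zeta>' / (snd \<zeta>' - b)^2)) \<in> borel_measurable borel"
proof -
  have m1: "(\<lambda>\<zeta>'::complex\<times>complex. fst \<zeta>' / (fst \<zeta>' - a)^2) \<in> borel_measurable borel"
    by (intro borel_measurable_divide cont_meas continuous_intros)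
  have m2: "(\<lambda>\<zeta>'::complex\<times>complex. snd \<zeta>' / (snd \<zeta>' - b)^2) \<in> borel_measurable borel"
    by (intro borel_measurable_divide cont_meas continuous_intros)
  have m3: "(\<lambda>\<zeta>'::complex\<times>complex. cnj (snd \<zeta>' / (snd \<zeta>' - b)^2)) \<in> borel_measurable borel"
    using measurable_compose[OF m2 cont_meas[OF continuous_on_cnj[OF continuous_on_id]]] by simp
  show ?thesis by (rule borel_measurable_times[OF m1 m3])
qed

theorem theorem2p1:
  fixes \<phi> :: "complex \<times> complex \<Rightarrow> complex" and \<alpha> :: complex
    and \<sigma> :: "(complex \<times> complex) measure"
  assumes "rational_inner \<phi>"
    and "\<not> (\<exists>c. \<forall>z\<in>bidisk. \<phi> z = c)"
    and "norm \<alpha> = 1"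
    and "is_clark_measure \<phi> \<alpha> \<sigma>"
  shows "\<forall>\<zeta>\<in>torus2. emeasure \<sigma> {\<zeta>} = 0"
proof -
  obtain p q where p: "bipoly p" and q: "bipoly q" and qnz: "\<exists>z\<in>bidisk. q z \<noteq> 0"
    and eq: "\<forall>z\<in>bidisk. q z \<noteq> 0 \<longrightarrow> \<phi> z = p z / q z" and cont: "continuous_on bidisk \<phi>"
    using assms(1) unfolding rational_inner_def by blast
  have sets: "sets \<sigma> = sets borel" and fin: "finite_measure \<sigma>"
    and null: "emeasure \<sigma> (UNIV - torus2) = 0"
    and rep: "\<And>z. z \<in> bidisk \<Longrightarrow> ennreal ((1 - (norm (\<phi> z))\<^sup>2) / (norm (\<alpha> - \<phi> z))\<^sup>2) = (\<integral>\<^sup>+ \<zeta>. ennreal (poisson2 z \<zeta>) \<partial>\<sigma>)"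
    using assms(4) unfolding is_clark_measure_def by auto
  interpret fm: finite_measure \<sigma> by (rule fin)
  have spc: "space \<sigma> = UNIV" using sets_eq_imp_space_eq[OF sets] by simp
  have \<alpha>1: "norm \<alpha> = 1" by (rule assms(3))
  show ?thesis
  proof
    fix \<zeta> assume \<zeta>: "\<zeta> \<in> torus2"
    have n1: "norm (fst \<zeta>) = 1" and n2: "norm (snd \<zeta>) = 1" using \<zeta> by (auto simp: torus2_def)
    define u where "u z = (1 - (norm (\<phi> z))^2) / (norm (\<alpha> - \<phi> z))^2" for z
    have low: "emeasure \<sigma> {\<zeta>} * ennreal (poisson2 z \<zeta>) \<le> ennreal (u z)" if "z \<in> bidisk" for z
      using key_lower[OF sets, of \<zeta> "poisson2 z"] rep[OF that] by (simp add: u_def)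
    have ppos: "poisson2 z \<zeta> > 0" if "z \<in> bidisk" for z
      using that n1 n2 by (auto simp: poisson2_PK bidisk_def intro!: mult_pos_pos PK_pos)
    show "emeasure \<sigma> {\<zeta>} = 0"
    proof (cases "\<exists>z\<in>bidisk. u z \<le> 0")
      case True
      then obtain z where z: "z \<in> bidisk" "u z \<le> 0" by blast
      then have "ennreal (u z) = 0" by (simp add: ennreal_eq_0_iff)
      then have "emeasure \<sigma> {\<zeta>} * ennreal (poisson2 z \<zeta>) = 0" using low[OF z(1)] by simp
      then show ?thesis using ppos[OF z(1)] by (simp add: ennreal_eq_0_iff)
    next
      case False
      then have upos: "u z > 0" if "z \<in> bidisk" for z using that by force
      have n\<alpha>: "\<phi> z \<noteq> \<alpha>" if "z \<in> bidisk" for z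
      proof
        assume "\<phi> z = \<alpha>" then have "u z = 0" by (simp add: u_def)
        with upos[OF that] show False by simp
      qed
      define h where "h z = (\<alpha> + \<phi> z) / (\<alpha> - \<phi> z)" for z
      have uRe: "u z = Re (h z)" if "z \<in> bidisk" for z
        using Re_cayley[OF \<alpha>1, of "\<phi> z"] n\<alpha>[OF that] by (simp add: u_def h_def)
      have contH: "continuous_on bidisk h"
        unfolding h_def using n\<alpha> by (intro continuous_intros cont) auto
      have mfst: "(\<lambda>\<zeta>'::complex\<times>complex. fst \<zeta>') \<in> borel_measurable borel"
        by (intro cont_meas continuous_intros)
      have msnd: "(\<lambda>\<zeta>'::complex\<times>complex. snd \<zeta>') \<in> borel_measurable borel"
        by (intro cont_meas continuous_intros)
      have AEt: "AE \<zeta>' in \<sigma>. \<zeta>' \<in> torus2"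
      proof -
        have "UNIV - torus2 \<in> sets \<sigma>" using sets torus2_sets by auto
        then have "UNIV - torus2 \<in> null_sets \<sigma>" using null by (intro null_setsI) auto
        then show ?thesis by (rule AE_I') (auto simp: spc)
      qed
      have repL: "u z = (\<integral>\<zeta>'. indicator torus2 \<zeta>' * poisson2 z \<zeta>' \<partial>\<sigma>)" if z: "z \<in> bidisk" for z
      proof -
        define g where "g \<zeta>' = indicator torus2 \<zeta>' * (PK (fst z) (fst \<zeta>') * PK (snd z) (snd \<zeta>'))" for \<zeta>'
        have a1: "norm (fst z) < 1" "norm (snd z) < 1" using z by (auto simp: bidisk_def)
        have gm: "g \<in> borel_measurable \<sigma>"
          unfolding g_def
          by (rule meas_sigma[OF sets borel_measurable_times[OF borel_measurable_indicator[OF torus2_sets]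
                 borel_measurable_times[OF PK_meas[OF borel_measurable_const mfst] PK_meas[OF borel_measurable_const msnd]]]])
        define K where "K = 1 / (1 - norm (fst z))^2 * (1 / (1 - norm (snd z))^2)"
        have gb: "norm (g \<zeta>') \<le> K" for \<zeta>'
        proof (cases "\<zeta>' \<in> torus2")
          case True
          then have m1: "norm (fst \<zeta>') = 1" and m2: "norm (snd \<zeta>') = 1" by (auto simp: torus2_def)
          note b1 = PK_bound[OF m1 order_refl a1(1)] and b2 = PK_bound[OF m2 order_refl a1(2)]
          have "norm (g \<zeta>') = PK (fst z) (fst \<zeta>') * PK (snd z) (snd \<zeta>')"
            using True b1(2) b2(2) by (simp add: g_def)
          also have "\<dots> \<le> K" unfolding K_def using b1 b2 by (intro mult_mono) auto
          finally show ?thesis .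
        next
          case False
          then show ?thesis by (simp add: g_def K_def)
        qed
        have gi: "integrable \<sigma> g"
        proof (rule fm.integrable_const_bound[where B=K])
          show "AE x in \<sigma>. norm (g x) \<le> K" using gb by (intro AE_I2) blast
          show "g \<in> borel_measurable \<sigma>" by (rule gm)
        qed
        have pk0: "0 \<le> PK w x" if "norm w < 1" for w x
          using that unfolding PK_def by (intro divide_nonneg_nonneg) (auto simp: power_le_one abs_le_iff power2_le_iff_abs_le)
        have g0: "0 \<le> g \<zeta>'" for \<zeta>' using pk0[OF a1(1)] pk0[OF a1(2)] by (simp add: g_def)
        have "(\<integral>\<^sup>+\<zeta>'. ennreal (poisson2 z \<zeta>') \<partial>\<sigma>) = (\<integral>\<^sup>+\<zeta>'. ennreal (g \<zeta>') \<partial>\<sigma>)"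
          by (rule nn_integral_cong_AE) (use AEt in \<open>eventually_elim, simp add: g_def poisson2_PK\<close>)
        also have "\<dots> = ennreal (integral\<^sup>L \<sigma> g)"
          by (rule nn_integral_eq_integral[OF gi]) (simp add: g0)
        finally have "ennreal (u z) = ennreal (integral\<^sup>L \<sigma> g)" using rep[OF z] by (simp add: u_def)
        then have "u z = integral\<^sup>L \<sigma> g"
          using upos[OF z] Bochner_Integration.integral_nonneg[of \<sigma> g] g0 by (simp add: ennreal_inj)
        then show ?thesis by (simp add: g_def[abs_def] poisson2_PK mult.assoc)
      qed
      define B2 where "B2 = {y. \<forall>x. q (x, y) = 0}"
      define qs where "qs z = q (snd z, fst z)" for z
      define B1 where "B1 = {y. \<forall>x. qs (x, y) = 0}"
      have qex: "\<exists>z. q z \<noteq> 0" using qnz by blast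
      have finB2: "finite B2" unfolding B2_def by (rule bad_finite[OF q qex])
      have qsb: "bipoly qs" unfolding qs_def by (rule bipoly_swap[OF q])
      have finB1: "finite B1" unfolding B1_def
      proof (rule bad_finite[OF qsb])
        obtain z where "q z \<noteq> 0" using qex by blast
        then show "\<exists>z. qs z \<noteq> 0" unfolding qs_def by (intro exI[of _ "(snd z, fst z)"]) simp
      qed
      have hol1: "(\<lambda>x. h (x, y)) holomorphic_on ball 0 1" if y1: "norm y < 1" and y2: "y \<notin> B2" for y
      proof -
        have hh: "(\<lambda>x. \<phi> (x, y)) holomorphic_on ball 0 1"
          by (rule slice_hol[OF p q eq cont y1]) (use y2 in \<open>simp add: B2_def\<close>)
        have nz: "\<alpha> - \<phi> (x, y) \<noteq> 0" if "x \<in> ball 0 1" for x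
        proof -
          have "(x, y) \<in> bidisk" using that y1 by (simp add: bidisk_def)
          then show ?thesis using n\<alpha> by force
        qed
        show ?thesis unfolding h_def using hh nz by (intro holomorphic_intros) auto
      qed
      have hol2: "(\<lambda>y. h (x, y)) holomorphic_on ball 0 1" if x1: "norm x < 1" and x2: "x \<notin> B1" for x
      proof -
        define \<phi>s where "\<phi>s z = \<phi> (snd z, fst z)" for z
        define ps where "ps z = p (snd z, fst z)" for z
        have psb: "bipoly ps" unfolding ps_def by (rule bipoly_swap[OF p])
        have sw: "(snd z, fst z) \<in> bidisk \<longleftrightarrow> z \<in> bidisk" for z :: "complex \<times> complex" by (auto simp: bidisk_def)
        have eqs: "\<forall>z\<in>bidisk. qs z \<noteq> 0 \<longrightarrow> \<phi>s z = ps z / qs z" using eq sw by (simp add: \<phi>s_def ps_def qs_def)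
        have conts: "continuous_on bidisk \<phi>s"
        proof -
          have c1: "continuous_on bidisk (\<lambda>z::complex\<times>complex. (snd z, fst z))" by (intro continuous_intros)
          have c2: "(\<lambda>z::complex\<times>complex. (snd z, fst z)) ` bidisk \<subseteq> bidisk" using sw by auto
          show ?thesis unfolding \<phi>s_def by (rule continuous_on_compose2[OF cont c1 c2])
        qed
        have "(\<lambda>y. \<phi>s (y, x)) holomorphic_on ball 0 1"
          by (rule slice_hol[OF psb qsb eqs conts x1]) (use x2 in \<open>auto simp: B1_def\<close>)
        then have hh: "(\<lambda>y. \<phi> (x, y)) holomorphic_on ball 0 1" by (simp add: \<phi>s_def)
        have nz: "\<alpha> - \<phi> (x, y) \<noteq> 0" if "y \<in> ball 0 1" for y
        proof -
          have "(x, y) \<in> bidisk" using that x1 by (simp add: bidisk_def)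
          then show ?thesis using n\<alpha> by force
        qed
        show ?thesis unfolding h_def using hh nz by (intro holomorphic_intros) auto
      qed
      have zero: "(\<integral>\<zeta>'. indicator torus2 \<zeta>' *\<^sub>R (fst \<zeta>' / (fst \<zeta>' - of_real r * fst \<zeta>)^2 * cnj (snd \<zeta>' / (snd \<zeta>' - of_real r * snd \<zeta>)^2)) \<partial>\<sigma>) = 0"
        if r: "0 < r" "r < 1" for r
      proof -
        define c1 where "c1 = of_real r * fst \<zeta>"
        define c2 where "c2 = of_real r * snd \<zeta>"
        have nc1: "norm c1 = r" and nc2: "norm c2 = r" using n1 n2 r by (simp_all add: c1_def c2_def norm_mult)
        define S where "S = (\<lambda>b. norm (b - c1)) ` B1 \<union> (\<lambda>b. norm (b - c2)) ` B2"
        have "finite S" using finB1 finB2 by (simp add: S_def)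
        moreover have "infinite {0<..<1 - r}" using r by (simp add: infinite_Ioo)
        ultimately have "infinite ({0<..<1 - r} - S)" by (simp add: Diff_infinite_finite)
        then obtain \<rho> where \<rho>: "\<rho> \<in> {0<..<1 - r}" "\<rho> \<notin> S" using infinite_imp_nonempty by blast
        have r0: "\<rho> > 0" and c1b: "norm c1 + \<rho> < 1" and c2b: "norm c2 + \<rho> < 1" using \<rho> nc1 nc2 by auto
        have dist1: "norm ((c1 + of_real \<rho> * EE s) - c1) = \<rho>" for s using r0 by (simp add: norm_mult)
        have dist2: "norm ((c2 + of_real \<rho> * EE s) - c2) = \<rho>" for s using r0 by (simp add: norm_mult)
        have on1: "c1 + of_real \<rho> * EE s \<notin> B1" for s
        proof
          assume "c1 + of_real \<rho> * EE s \<in> B1"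
          then have "norm ((c1 + of_real \<rho> * EE s) - c1) \<in> S" unfolding S_def by blast
          then show False using \<rho> dist1[of s] by simp
        qed
        have on2: "c2 + of_real \<rho> * EE s \<notin> B2" for s
        proof
          assume "c2 + of_real \<rho> * EE s \<in> B2"
          then have "norm ((c2 + of_real \<rho> * EE s) - c2) \<in> S" unfolding S_def by blast
          then show False using \<rho> dist2[of s] by simp
        qed
        have inb: "(c1 + of_real \<rho> * EE s, c2 + of_real \<rho> * EE t) \<in> bidisk" for s t
          using circ_in_ball[OF c1b r0] circ_in_ball[OF c2b r0] by (simp add: bidisk_def)
        have cm1: "continuous_on (cbox (0,0) (1,1)) (\<lambda>x::real\<times>real. (c1 + of_real \<rho> * EE (fst x), c2 + of_real \<rho> * EE (snd x)))"
          by (intro continuous_intros)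
        have cm2: "(\<lambda>x::real\<times>real. (c1 + of_real \<rho> * EE (fst x), c2 + of_real \<rho> * EE (snd x))) ` cbox (0,0) (1,1) \<subseteq> bidisk"
          using inb by auto
        have contmap: "continuous_on (cbox (0,0) (1,1)) (\<lambda>x::real\<times>real. h (c1 + of_real \<rho> * EE (fst x), c2 + of_real \<rho> * EE (snd x)))"
          by (rule continuous_on_compose2[OF contH cm1 cm2])
        have D: "integral {0..1} (\<lambda>s. integral {0..1} (\<lambda>t. of_real (Re (h (c1 + of_real \<rho> * EE s, c2 + of_real \<rho> * EE t))) * cnj (EE s) * EE t)) = 0"
        proof (rule double_zero[OF contmap _ _ c1b c2b r0])
          fix s :: real
          show "(\<lambda>y. h (c1 + of_real \<rho> * EE s, y)) holomorphic_on ball 0 1"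
            by (rule hol2) (use circ_in_ball[OF c1b r0] on1 in auto)
        next
          fix t :: real
          show "(\<lambda>x. h (x, c2 + of_real \<rho> * EE t)) holomorphic_on ball 0 1"
            by (rule hol1) (use circ_in_ball[OF c2b r0] on2 in auto)
        qed
        have contRe: "continuous_on (cbox (0,0) (1,1)) (\<lambda>x::real\<times>real. Re (h (c1 + of_real \<rho> * EE (fst x), c2 + of_real \<rho> * EE (snd x))))"
          by (intro continuous_intros contmap)
        have U: "Re (h (c1 + of_real \<rho> * EE s, c2 + of_real \<rho> * EE t)) = (\<integral>\<zeta>'. indicator torus2 \<zeta>' * poisson2 (c1 + of_real \<rho> * EE s, c2 + of_real \<rho> * EE t) \<zeta>' \<partial>\<sigma>)" for s t
          using repL[OF inb] uRe[OF inb] by simp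
        have F: "integral {0..1} (\<lambda>s. integral {0..1} (\<lambda>t. of_real (Re (h (c1 + of_real \<rho> * EE s, c2 + of_real \<rho> * EE t))) * cnj (EE s) * EE t))
            = (\<integral>\<zeta>'. indicator torus2 \<zeta>' *\<^sub>R ((\<rho> * fst \<zeta>' / (fst \<zeta>' - c1)^2) * cnj (\<rho> * snd \<zeta>' / (snd \<zeta>' - c2)^2)) \<partial>\<sigma>)"
          using fubini_step[OF sets fin c1b c2b r0, where u = "\<lambda>z. Re (h z)"] U contRe by simp
        have eqi: "indicator torus2 \<zeta>' *\<^sub>R ((\<rho> * fst \<zeta>' / (fst \<zeta>' - c1)^2) * cnj (\<rho> * snd \<zeta>' / (snd \<zeta>' - c2)^2))
            = of_real (\<rho> * \<rho>) * (indicator torus2 \<zeta>' *\<^sub>R (fst \<zeta>' / (fst \<zeta>' - c1)^2 * cnj (snd \<zeta>' / (snd \<zeta>' - c2)^2)))" for \<zeta>' :: "complex \<times> complex"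
          by (simp add: scaleR_conv_of_real mult_ac)
        have I: "(\<integral>\<zeta>'. indicator torus2 \<zeta>' *\<^sub>R ((\<rho> * fst \<zeta>' / (fst \<zeta>' - c1)^2) * cnj (\<rho> * snd \<zeta>' / (snd \<zeta>' - c2)^2)) \<partial>\<sigma>)
            = of_real (\<rho> * \<rho>) * (\<integral>\<zeta>'. indicator torus2 \<zeta>' *\<^sub>R (fst \<zeta>' / (fst \<zeta>' - c1)^2 * cnj (snd \<zeta>' / (snd \<zeta>' - c2)^2)) \<partial>\<sigma>)"
          by (simp only: eqi integral_mult_right_zero)
        have Y0: "(\<integral>\<zeta>'. indicator torus2 \<zeta>' *\<^sub>R ((\<rho> * fst \<zeta>' / (fst \<zeta>' - c1)^2) * cnj (\<rho> * snd \<zeta>' / (snd \<zeta>' - c2)^2)) \<partial>\<sigma>) = 0"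
          by (rule trans[OF F[symmetric] D])
        have "of_real (\<rho> * \<rho>) * (\<integral>\<zeta>'. indicator torus2 \<zeta>' *\<^sub>R (fst \<zeta>' / (fst \<zeta>' - c1)^2 * cnj (snd \<zeta>' / (snd \<zeta>' - c2)^2)) \<partial>\<sigma>) = 0"
          using Y0 unfolding I .
        then show ?thesis using r0 by (simp add: c1_def c2_def)
      qed
      define rr where "rr n = 1 - 1 / real (n + 2)" for n :: nat
      have rr: "0 < rr n" "rr n < 1" for n by (auto simp: rr_def field_simps)
      have rrlim: "rr \<longlonglongrightarrow> 1"
      proof -
        have "(\<lambda>n. 1 / real (n + 2)) \<longlonglongrightarrow> 0"
          using LIMSEQ_ignore_initial_segment[OF lim_const_over_n[of 1], of 2] by simp
        moreover have "rr = (\<lambda>n. 1 - 1 / real (n + 2))" by (rule ext) (simp add: rr_def)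
        ultimately show ?thesis using tendsto_diff[OF tendsto_const, of "\<lambda>n. 1 / real (n + 2)" 0 sequentially "1::real"] by simp
      qed
      define K where "K n \<zeta>' = of_real ((1 - rr n)^4) * (indicator torus2 \<zeta>' *\<^sub>R (fst \<zeta>' / (fst \<zeta>' - of_real (rr n) * fst \<zeta>)^2 * cnj (snd \<zeta>' / (snd \<zeta>' - of_real (rr n) * snd \<zeta>)^2)))" for n and \<zeta>' :: "complex \<times> complex"
      define L where "L \<zeta>' = indicator {\<zeta>} \<zeta>' *\<^sub>R (cnj (fst \<zeta>) * snd \<zeta>)" for \<zeta>' :: "complex \<times> complex"
      have Kint: "integral\<^sup>L \<sigma> (K n) = 0" for n
      proof -
        have "integral\<^sup>L \<sigma> (K n) = of_real ((1 - rr n)^4) * (\<integral>\<zeta>'. indicator torus2 \<zeta>' *\<^sub>R (fst \<zeta>' / (fst \<zeta>' - of_real (rr n) * fst \<zeta>)^2 * cnj (snd \<zeta>' / (snd \<zeta>' - of_real (rr n) * snd \<zeta>)^2)) \<partial>\<sigma>)"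
          by (simp only: K_def[abs_def] integral_mult_right_zero)
        also have "\<dots> = 0" by (simp only: zero[OF rr(1)[of n] rr(2)[of n]] mult_zero_right)
        finally show ?thesis .
      qed
      have Kmeas: "K n \<in> borel_measurable \<sigma>" for n
        unfolding K_def
        by (rule meas_sigma[OF sets borel_measurable_times[OF borel_measurable_const borel_measurable_scaleR[OF borel_measurable_indicator[OF torus2_sets] kern_meas]]])
      have Lmeas: "L \<in> borel_measurable \<sigma>"
        unfolding L_def
        by (rule meas_sigma[OF sets borel_measurable_scaleR[OF borel_measurable_indicator borel_measurable_const]]) simp
      have kn: "norm (K n \<zeta>') = ((1 - rr n)^2 / (norm (fst \<zeta>' - of_real (rr n) * fst \<zeta>))^2) * ((1 - rr n)^2 / (norm (snd \<zeta>' - of_real (rr n) * snd \<zeta>))^2)"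
        if "\<zeta>' \<in> torus2" for n and \<zeta>' :: "complex \<times> complex"
      proof -
        have m1: "norm (fst \<zeta>') = 1" and m2: "norm (snd \<zeta>') = 1" using that by (auto simp: torus2_def)
        show ?thesis using kern_norm[OF m1 m2, of "rr n" "of_real (rr n) * fst \<zeta>" "of_real (rr n) * snd \<zeta>"] that
          by (simp add: K_def)
      qed
      have fb: "0 \<le> (1 - rr n)^2 / (norm (a - of_real (rr n) * b))^2 \<and> (1 - rr n)^2 / (norm (a - of_real (rr n) * b))^2 \<le> 1"
        if "norm a = 1" "norm b = 1" for n and a b :: complex
        using frac_le1[OF that rr(1)[of n] rr(2)[of n]] by simp
      have Kbound: "norm (K n \<zeta>') \<le> 1" for n and \<zeta>' :: "complex \<times> complex"
      proof (cases "\<zeta>' \<in> torus2")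
        case True
        then have m1: "norm (fst \<zeta>') = 1" and m2: "norm (snd \<zeta>') = 1" by (auto simp: torus2_def)
        show ?thesis unfolding kn[OF True] using fb[OF m1 n1, of n] fb[OF m2 n2, of n]
          by (metis mult_le_one)
      next
        case False then show ?thesis by (simp add: K_def)
      qed
      have fz: "(\<lambda>n. (1 - rr n)^2 / (norm (a - of_real (rr n) * b))^2) \<longlonglongrightarrow> 0" if "a \<noteq> b" for a b :: complex
      proof -
        have "(\<lambda>n. (1 - rr n)^2 / (norm (a - of_real (rr n) * b))^2) \<longlonglongrightarrow> (1 - 1)^2 / (norm (a - of_real 1 * b))^2"
          using that by (intro tendsto_intros rrlim) auto
        then show ?thesis by simp
      qed
      have Klim: "(\<lambda>n. K n \<zeta>') \<longlonglongrightarrow> L \<zeta>'" for \<zeta>' :: "complex \<times> complex"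
      proof (cases "\<zeta>' = \<zeta>")
        case True
        have "K n \<zeta>' = cnj (fst \<zeta>) * snd \<zeta>" for n
          using True \<zeta> kern_at[OF n1 n2 rr(2)[of n]] by (simp add: K_def)
        then show ?thesis using True by (simp add: L_def)
      next
        case ne: False
        then have L0: "L \<zeta>' = 0" by (simp add: L_def)
        show ?thesis
        proof (cases "\<zeta>' \<in> torus2")
          case False
          then show ?thesis by (simp add: K_def L0)
        next
          case True
          then have m1: "norm (fst \<zeta>') = 1" and m2: "norm (snd \<zeta>') = 1" by (auto simp: torus2_def)
          have "fst \<zeta>' \<noteq> fst \<zeta> \<or> snd \<zeta>' \<noteq> snd \<zeta>" using ne by (auto simp: prod_eq_iff)
          then obtain g where gl: "g \<longlonglongrightarrow> 0" and gb: "\<And>n. norm (K n \<zeta>') \<le> g n"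
          proof
            assume d: "fst \<zeta>' \<noteq> fst \<zeta>"
            show thesis
            proof (rule that[OF fz[OF d]])
              fix n show "norm (K n \<zeta>') \<le> (1 - rr n)^2 / (norm (fst \<zeta>' - of_real (rr n) * fst \<zeta>))^2"
                unfolding kn[OF True] using fb[OF m1 n1, of n] fb[OF m2 n2, of n]
                by (intro mult_right_le_one_le) auto
            qed
          next
            assume d: "snd \<zeta>' \<noteq> snd \<zeta>"
            show thesis
            proof (rule that[OF fz[OF d]])
              fix n show "norm (K n \<zeta>') \<le> (1 - rr n)^2 / (norm (snd \<zeta>' - of_real (rr n) * snd \<zeta>))^2"
                unfolding kn[OF True] using fb[OF m1 n1, of n] fb[OF m2 n2, of n]
                by (intro mult_left_le_one_le) auto
            qed
          qed
          have "(\<lambda>n. K n \<zeta>') \<longlonglongrightarrow> 0"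
            by (rule Lim_null_comparison[OF _ gl]) (simp add: gb)
          then show ?thesis by (simp add: L0)
        qed
      qed
      have "(\<lambda>n. integral\<^sup>L \<sigma> (K n)) \<longlonglongrightarrow> integral\<^sup>L \<sigma> L"
        by (rule integral_dominated_convergence[where w="\<lambda>_. 1"]) (auto simp: Kmeas Lmeas Kbound Klim)
      then have IL: "integral\<^sup>L \<sigma> L = 0" using Kint by (simp add: LIMSEQ_const_iff)
      have "integral\<^sup>L \<sigma> L = measure \<sigma> {\<zeta>} *\<^sub>R (cnj (fst \<zeta>) * snd \<zeta>)"
      proof -
        have "integrable \<sigma> (\<lambda>\<zeta>'. indicator {\<zeta>} \<zeta>' :: real)"
        proof (rule fm.integrable_const_bound[where B=1])
          show "AE x in \<sigma>. norm (indicator {\<zeta>} x :: real) \<le> 1" by (intro AE_I2) (simp add: indicator_def)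
          show "(\<lambda>\<zeta>'. indicator {\<zeta>} \<zeta>' :: real) \<in> borel_measurable \<sigma>"
            by (rule meas_sigma[OF sets borel_measurable_indicator]) simp
        qed
        then show ?thesis by (simp add: L_def[abs_def] spc)
      qed
      moreover have "cnj (fst \<zeta>) * snd \<zeta> \<noteq> 0" using n1 n2 by auto
      ultimately have "measure \<sigma> {\<zeta>} = 0" using IL by simp
      then show ?thesis using fm.emeasure_eq_measure[of "{\<zeta>}"] by simp
    qed
  qed
qed

end
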